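(* For $N\in\mathbb{N}$ (so $N\ge1$) and $k\in\mathbb{N}\cup\{0\}$, \begin{align*} \mathrm{Ch}_{k+N,\lambda}(x)&=\lambda^{N}\sum_{r=1}^{N}\sum_{i=0}^{r}a^{(\lambda)}_{i,r-i}(N,x)\,\lambda^{-r}2^{-i}\sum_{m+n+a=k}\binom{k}{m,n,a}\Bigl(-\tfrac12\Bigr)^{m}(-1)^{n}(i+m-1)_m\,(r+n-i-1)_n\\ &\qquad\times\sum_{l+e+f+s=a}(-1)^{l}\lambda^{a-s}\frac{\binom{a}{l,e,f,s}}{\binom{e+m}{m}\binom{f+n}{n}}\,(N+l-1)_l\,S_1(e+m,m)\,S_1(f+n,n)\,\mathrm{Ch}_{s,\lambda}(x), \end{align*} where the inner sums run over nonnegative integers, and for $1\le r\le N$, $0\le i\le r$, \[ a^{(\lambda)}_{i,r-i}(N,x)=(-1)^{N+i-r}\, i!\, S_{1,i-1}(r-i)\,(N-1)!\,H_{N-1,r-1}\,(x)_{r-i}. \]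
   Context: Let $\lambda\neq0$. The $\lambda$-Changhee (degenerate Changhee) polynomials $\mathrm{Ch}_{n,\lambda}(x)$ are defined by \[ \frac{2\lambda}{2\lambda+\log(1+\lambda t)}\Bigl(1+\frac{\log(1+\lambda t)}{\lambda}\Bigr)^{x}=\sum_{n=0}^{\infty}\mathrm{Ch}_{n,\lambda}(x)\frac{t^n}{n!}. \] $(y)_0=1$ and $(y)_n=y(y-1)\cdots(y-n+1)$ for $n\ge1$ (falling factorial; in particular $(n-1)_n=0$ for $n\ge1$). $S_1(n,l)$ are the Stirling numbers of the first kind, defined by $(y)_n=\sum_{l=0}^n S_1(n,l)y^l$. Multinomial coefficients $\binom{k}{m,n,a}=\frac{k!}{m!\,n!\,a!}$, etc. Generalized harmonic numbers: $H_{N,0}=1$ for all integers $N\ge 0$; $H_{N,1}=1+\frac12+\cdots+\frac1N$ for $N\ge1$; and for $2\le j\le N$, $H_{N,j}=\frac{H_{N-1,j-1}}{N}+\frac{H_{N-2,j-1}}{N-1}+\cdots+\frac{H_{j-1,j-1}}{j}$. Generalized Changhee power sums (for $k=1$), for integers $N\ge0$: $S_{1,-1}(N)=1$, $S_{1,0}(N)=N+1$, $S_{1,j}(N)=\sum_{l=0}^{N}S_{1,j-1}(l)$ for $j\ge1$. *)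

theory Defs
  imports Complex_Main "HOL-Computational_Algebra.Formal_Power_Series"
    "HOL-Combinatorics.Stirling"
begin

definition log1p_fps :: "real \<Rightarrow> real fps" where
  "log1p_fps lam = fps_ln 1 oo (fps_const lam * fps_X)"

text \<open>Generating function 2 lam / (2 lam + log(1+lam t)) * (1 + log(1+lam t)/lam)^x,
  where (1+u)^x = sum_n (x gchoose n) u^n (fps_binomial) composed with u = log(1+lam t)/lam.\<close>
definition changhee_gf :: "real \<Rightarrow> real \<Rightarrow> real fps" where
  "changhee_gf lam x =
     fps_const (2 * lam) * inverse (fps_const (2 * lam) + log1p_fps lam)
     * (fps_binomial x oo (fps_const (1 / lam) * log1p_fps lam))"

definition Ch :: "nat \<Rightarrow> real \<Rightarrow> real \<Rightarrow> real" where
  "Ch n lam x = fact n * fps_nth (changhee_gf lam x) n"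

definition falling :: "real \<Rightarrow> nat \<Rightarrow> real" where
  "falling y n = (\<Prod>j<n. y - of_nat j)"

text \<open>Signed Stirling numbers of the first kind: (y)_n = sum_l S1 n l y^l.\<close>
definition S1 :: "nat \<Rightarrow> nat \<Rightarrow> int" where
  "S1 n l = (-1) ^ (n - l) * int (stirling n l)"

fun harm :: "nat \<Rightarrow> nat \<Rightarrow> real" where
  "harm N 0 = 1"
| "harm N (Suc j) = (\<Sum>m = Suc j..N. harm (m - 1) j / of_nat m)"

text \<open>Changhee power sums with shifted index: S1pow i N = S_{1,i-1}(N).\<close>
fun S1pow :: "nat \<Rightarrow> nat \<Rightarrow> nat" where
  "S1pow 0 N = 1"
| "S1pow (Suc i) N = (\<Sum>l\<le>N. S1pow i l)"

definition acoef :: "nat \<Rightarrow> nat \<Rightarrow> nat \<Rightarrow> real \<Rightarrow> real" where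
  "acoef N r i x = (-1) ^ (N + i - r) * fact i * of_nat (S1pow i (r - i))
      * fact (N - 1) * harm (N - 1) (r - 1) * falling x (r - i)"

end

theory Submission
  imports Defs
begin

unbundle fps_syntax



definition WW :: "real \<Rightarrow> real fps" where "WW lam = 1 + fps_const lam * fps_X"
definition th :: "real \<Rightarrow> real fps \<Rightarrow> real fps" where "th lam f = WW lam * fps_deriv f"
definition uu :: "real \<Rightarrow> real fps" where "uu lam = fps_const (1/lam) * log1p_fps lam"
definition Bu :: "real \<Rightarrow> real \<Rightarrow> real fps" where "Bu lam a = fps_binomial a oo uu lam"
definition Bh :: "real \<Rightarrow> real \<Rightarrow> real fps" where "Bh lam a = fps_binomial a oo (fps_const (1/2) * uu lam)"

lemma log1p_0[simp]: "log1p_fps lam $ 0 = 0"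
  by (simp add: log1p_fps_def)
lemma uu_0[simp]: "uu lam $ 0 = 0"
  by (simp add: uu_def)
lemma uh_0[simp]: "(fps_const (1/2) * uu lam) $ 0 = 0"
  by simp

lemma compose_lin_inv: "(inverse (1 + fps_X) oo (fps_const c * fps_X)) = inverse (WW c)"
proof -
  have c0: "(fps_const c * fps_X :: real fps) $ 0 = 0" by simp
  have "(inverse (1 + fps_X) oo (fps_const c * fps_X)) * WW c
      = (inverse (1 + fps_X) * (1 + fps_X) oo (fps_const c * fps_X))"
    by (simp add: fps_compose_mult_distrib[OF c0] fps_compose_add_distrib WW_def
        fps_X_fps_compose_startby0)
  also have "inverse (1 + fps_X) * (1 + fps_X) = (1::real fps)"
    by (simp add: inverse_mult_eq_1)
  finally have h: "(inverse (1 + fps_X) oo (fps_const c * fps_X)) * WW c = 1" by simp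
  have w0: "WW c $ 0 \<noteq> 0" by (simp add: WW_def)
  have "inverse (WW c) = ((inverse (1 + fps_X) oo (fps_const c * fps_X)) * WW c) * inverse (WW c)"
    using h by simp
  also have "\<dots> = (inverse (1 + fps_X) oo (fps_const c * fps_X))"
    using w0 by (simp add: mult.assoc inverse_mult_eq_1')
  finally show ?thesis by simp
qed

lemma WW_inv: "WW lam * inverse (WW lam) = 1"
  by (simp add: WW_def inverse_mult_eq_1')

lemma deriv_log1p: "fps_deriv (log1p_fps lam) = fps_const lam * inverse (WW lam)"
proof -
  have c0: "(fps_const lam * fps_X :: real fps) $ 0 = 0" by simp
  show ?thesis
    unfolding log1p_fps_def fps_compose_deriv[OF c0] fps_ln_deriv compose_lin_inv[symmetric]
    by (simp add: mult.commute)
qed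

lemma th_uu: "lam \<noteq> 0 \<Longrightarrow> th lam (uu lam) = 1"
proof -
  assume "lam \<noteq> 0"
  then have "fps_const lam * fps_const (1/lam) = (1::real fps)" by (simp add: fps_const_mult)
  then have "th lam (uu lam) = (fps_const lam * fps_const (1/lam)) * (WW lam * inverse (WW lam))"
    by (simp add: th_def uu_def deriv_log1p)
  also have "\<dots> = 1" using \<open>fps_const lam * fps_const (1/lam) = (1::real fps)\<close> WW_inv by simp
  finally show ?thesis .
qed

lemma th_compose: "v $ 0 = 0 \<Longrightarrow> th lam (f oo v) = (fps_deriv f oo v) * th lam v"
  by (simp add: th_def fps_compose_deriv mult.commute mult.left_commute)

lemma binom_deriv: "fps_deriv (fps_binomial (a::real)) = fps_const a * fps_binomial (a - 1)"
proof -
  have "fps_binomial a = fps_binomial (a - 1) * (1 + fps_X)"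
    using fps_binomial_add_mult[of "a - 1" 1] by (simp add: fps_binomial_1)
  moreover have "(1 + fps_X :: real fps) \<noteq> 0"
  proof
    assume "(1 + fps_X :: real fps) = 0"
    then have "(1 + fps_X :: real fps) $ 0 = 0" by simp
    then show False by simp
  qed
  ultimately show ?thesis
  proof -
    assume h: "fps_binomial a = fps_binomial (a - 1) * (1 + fps_X)" and nz: "(1 + fps_X :: real fps) \<noteq> 0"
    have "fps_const a * fps_binomial a / (1 + fps_X) = (fps_const a * fps_binomial (a - 1)) * (1 + fps_X) / (1 + fps_X)"
      by (subst h) (simp add: mult.assoc)
    also have "\<dots> = fps_const a * fps_binomial (a - 1)"
      using nz by simp
    finally show ?thesis by (simp only: fps_binomial_deriv)
  qed
qed

lemma const_compose_mult: "(fps_const c * f) oo v = fps_const c * (f oo v)"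
  by (simp add: fps_compose_def fps_eq_iff sum_distrib_left mult.assoc)

lemma th_Bu: "lam \<noteq> 0 \<Longrightarrow> th lam (Bu lam a) = fps_const a * Bu lam (a - 1)"
  by (simp add: Bu_def th_compose th_uu binom_deriv const_compose_mult)

lemma th_Bh: "lam \<noteq> 0 \<Longrightarrow> th lam (Bh lam a) = fps_const (a/2) * Bh lam (a - 1)"
proof -
  assume l: "lam \<noteq> 0"
  have "th lam (fps_const (1/2) * uu lam) = fps_const (1/2)"
    using th_uu[OF l] by (simp add: th_def mult.left_commute)
  then show ?thesis
    by (simp add: Bh_def th_compose binom_deriv const_compose_mult mult.commute mult.left_commute
        fps_const_mult)
qed

lemma Bu_mult: "Bu lam a * Bu lam b = Bu lam (a + b)"
  by (simp add: Bu_def fps_binomial_add_mult fps_compose_mult_distrib)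
lemma Bh_mult: "Bh lam a * Bh lam b = Bh lam (a + b)"
  by (simp add: Bh_def fps_binomial_add_mult fps_compose_mult_distrib)
lemma Bu_0[simp]: "Bu lam 0 = 1" by (simp add: Bu_def)
lemma Bh_0[simp]: "Bh lam 0 = 1" by (simp add: Bh_def)

lemma gf_eq: assumes "lam \<noteq> 0" shows "changhee_gf lam x = Bh lam (-1) * Bu lam x"
proof -
  define A where "A = fps_const (2 * lam) + log1p_fps lam"
  have A0: "A $ 0 \<noteq> 0" using assms by (simp add: A_def)
  have e1: "fps_const (1/2) * (fps_const (1/lam) * log1p_fps lam) = fps_const (1/(2*lam)) * log1p_fps lam"
    by (simp add: mult.assoc[symmetric] fps_const_mult)
  have e2: "fps_const (1/(2*lam)) * fps_const (2*lam) = (1::real fps)"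
    using assms by (simp add: fps_const_mult)
  have Bh1: "Bh lam 1 = fps_const (1/(2*lam)) * A"
    using assms unfolding Bh_def fps_binomial_1 fps_compose_add_distrib A_def uu_def
    by (simp add: fps_X_fps_compose_startby0 e1 e2 distrib_left)
  have e3: "fps_const (2*lam) * fps_const (1/(2*lam)) = (1::real fps)"
    using assms by (simp add: fps_const_mult)
  have "fps_const (2 * lam) * inverse A * Bh lam 1 = 
     (fps_const (2*lam) * fps_const (1/(2*lam))) * (inverse A * A)"
    unfolding Bh1 by (simp add: ac_simps)
  also have "\<dots> = 1" using e3 A0 by (simp add: inverse_mult_eq_1)
  finally have "fps_const (2 * lam) * inverse A * Bh lam 1 = 1" .
  hence "fps_const (2 * lam) * inverse A * Bh lam 1 * Bh lam (-1) = Bh lam (-1)" by simp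
  hence "fps_const (2 * lam) * inverse A = Bh lam (-1)"
    by (simp add: mult.assoc Bh_mult)
  then show ?thesis by (simp add: changhee_gf_def A_def Bu_def uu_def)
qed




lemma th_add: "th lam (f + g) = th lam f + th lam g"
  by (simp add: th_def distrib_left)
lemma th_diff: "th lam (f - g) = th lam f - th lam g"
  by (simp add: th_def right_diff_distrib)
lemma th_mult: "th lam (f * g) = th lam f * g + f * th lam g"
  by (simp add: th_def algebra_simps)
lemma th_const: "th lam (fps_const c * f) = fps_const c * th lam f"
  by (simp add: th_def algebra_simps)
lemma th_sum: "th lam (\<Sum>i\<in>S. f i) = (\<Sum>i\<in>S. th lam (f i))"
  by (induct S rule: infinite_finite_induct) (simp_all add: th_def algebra_simps)

lemma thn_Suc: "(th lam ^^ Suc n) f = th lam ((th lam ^^ n) f)" by simp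

lemma thn_add: "(th lam ^^ n) (f + g) = (th lam ^^ n) f + (th lam ^^ n) g"
  by (induct n) (simp_all add: th_add)
lemma thn_const: "(th lam ^^ n) (fps_const c * f) = fps_const c * (th lam ^^ n) f"
  by (induct n) (simp_all add: th_const)
lemma thn_zero[simp]: "(th lam ^^ n) 0 = 0"
  by (induct n) (simp_all add: th_def)
lemma thn_sum: "(th lam ^^ n) (\<Sum>i\<in>S. f i) = (\<Sum>i\<in>S. (th lam ^^ n) (f i))"
  by (induct S rule: infinite_finite_induct) (simp_all add: thn_add)

lemma falling_Suc: "falling y (Suc n) = falling y n * (y - of_nat n)"
  by (simp add: falling_def)
lemma falling_0[simp]: "falling y 0 = 1"
  by (simp add: falling_def)

lemma thn_Bu: "lam \<noteq> 0 \<Longrightarrow> (th lam ^^ n) (Bu lam a) = fps_const (falling a n) * Bu lam (a - of_nat n)"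
  by (induct n) (simp_all add: th_const th_Bu falling_Suc diff_diff_eq mult.assoc add.commute flip: fps_const_mult)

lemma thn_Bh: "lam \<noteq> 0 \<Longrightarrow> (th lam ^^ n) (Bh lam a) = fps_const (falling a n / 2 ^ n) * Bh lam (a - of_nat n)"
proof (induct n)
  case 0 then show ?case by simp
next
  case (Suc n)
  have "fps_const (falling a n / 2 ^ n) * fps_const ((a - of_nat n) / 2) = fps_const (falling a (Suc n) / 2 ^ Suc n)"
    by (simp add: fps_const_mult falling_Suc field_simps)
  then show ?case using Suc
    by (simp add: th_const th_Bh diff_diff_eq mult.assoc[symmetric] add.commute)
qed

lemma leibniz:
  "(th lam ^^ n) (f * g) = (\<Sum>i\<le>n. fps_const (of_nat (n choose i)) * ((th lam ^^ i) f * (th lam ^^ (n - i)) g))"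
proof (induct n)
  case 0 then show ?case by simp
next
  case (Suc n)
  define A where "A i = (th lam ^^ i) f" for i
  define B where "B i = (th lam ^^ i) g" for i
  define c where "c n i = fps_const (of_nat (n choose i) :: real)" for n i
  have thA: "th lam (A i) = A (Suc i)" for i by (simp add: A_def)
  have thB: "i \<le> n \<Longrightarrow> th lam (B (n - i)) = B (Suc n - i)" for i
    by (simp add: B_def Suc_diff_le)
  have "(th lam ^^ Suc n) (f * g) = th lam (\<Sum>i\<le>n. c n i * (A i * B (n - i)))"
    using Suc by (simp add: A_def B_def c_def)
  also have "\<dots> = (\<Sum>i\<le>n. c n i * (A (Suc i) * B (n - i)) + c n i * (A i * B (Suc n - i)))"
    unfolding th_sum c_def th_const
    by (intro sum.cong refl) (simp add: th_mult thA thB distrib_left)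
  also have "\<dots> = (\<Sum>i\<le>n. c n i * (A (Suc i) * B (n - i))) + (\<Sum>i\<le>n. c n i * (A i * B (Suc n - i)))"
    by (simp add: sum.distrib)
  also have "(\<Sum>i\<le>n. c n i * (A i * B (Suc n - i))) = (\<Sum>i\<le>Suc n. c n i * (A i * B (Suc n - i)))"
    by (simp add: c_def)
  also have "\<dots> = c n 0 * (A 0 * B (Suc n)) + (\<Sum>i\<le>n. c n (Suc i) * (A (Suc i) * B (n - i)))"
    by (subst sum.atMost_Suc_shift) simp
  finally have "(th lam ^^ Suc n) (f * g) = c n 0 * (A 0 * B (Suc n)) +
     (\<Sum>i\<le>n. (c n i + c n (Suc i)) * (A (Suc i) * B (n - i)))"
    by (simp add: distrib_right sum.distrib)
  also have "\<dots> = (\<Sum>i\<le>Suc n. c (Suc n) i * (A i * B (Suc n - i)))"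
    by (subst sum.atMost_Suc_shift) (simp add: c_def flip: fps_const_add)
  finally show ?case by (simp add: A_def B_def c_def)
qed

lemma falling_m1: "falling (-1) i = (-1) ^ i * fact i"
  by (induct i) (simp_all add: falling_Suc algebra_simps)

lemma thn_F:
  assumes "lam \<noteq> 0"
  shows "(th lam ^^ r) (changhee_gf lam x) = (\<Sum>i\<le>r. fps_const (of_nat (r choose i) * (-1) ^ i * fact i / 2 ^ i * falling x (r - i))
      * (Bh lam (- of_nat i) * Bu lam (- of_nat (r - i)) * changhee_gf lam x))"
proof -
  have e: "Bh lam (-1 - of_nat i) * Bu lam (x - of_nat (r - i)) = Bh lam (- of_nat i) * Bu lam (- of_nat (r - i)) * changhee_gf lam x" for i
  proof -
    have "(- of_nat i + -1::real) = -1 - of_nat i" by simp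
    then have "Bh lam (-1 - of_nat i) = Bh lam (- of_nat i) * Bh lam (-1)" by (metis Bh_mult)
    moreover have "Bu lam (x - of_nat (r - i)) = Bu lam (- of_nat (r - i)) * Bu lam x" by (simp add: Bu_mult)
    ultimately show ?thesis using assms by (simp add: gf_eq ac_simps)
  qed
  have t: "fps_const (of_nat (r choose i)) * ((th lam ^^ i) (Bh lam (-1)) * (th lam ^^ (r - i)) (Bu lam x))
     = fps_const (of_nat (r choose i) * (-1) ^ i * fact i / 2 ^ i * falling x (r - i))
      * (Bh lam (- of_nat i) * Bu lam (- of_nat (r - i)) * changhee_gf lam x)" for i
  proof -
    have "fps_const (of_nat (r choose i)) * ((th lam ^^ i) (Bh lam (-1)) * (th lam ^^ (r - i)) (Bu lam x))
      = (fps_const (of_nat (r choose i)) * fps_const (falling (-1) i / 2 ^ i) * fps_const (falling x (r - i)))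
        * (Bh lam (-1 - of_nat i) * Bu lam (x - of_nat (r - i)))"
      by (simp only: thn_Bh[OF assms] thn_Bu[OF assms] mult_ac)
    also have "\<dots> = fps_const (of_nat (r choose i) * (-1) ^ i * fact i / 2 ^ i * falling x (r - i))
      * (Bh lam (- of_nat i) * Bu lam (- of_nat (r - i)) * changhee_gf lam x)"
      unfolding e by (simp add: fps_const_mult falling_m1 mult.assoc)
    finally show ?thesis .
  qed
  show ?thesis
    unfolding gf_eq[OF assms] leibniz t[unfolded gf_eq[OF assms]] ..
qed




definition sig :: "nat \<Rightarrow> nat \<Rightarrow> real" where "sig N r = real_of_int (S1 N r)"

lemma sig_big: "N < r \<Longrightarrow> sig N r = 0"
  by (simp add: sig_def S1_def stirling_less)
lemma sig_Suc0: "sig (Suc N) 0 = 0"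
  by (simp add: sig_def S1_def)
lemma sig_00: "sig 0 0 = 1"
  by (simp add: sig_def S1_def)
lemma sig_rec: "sig (Suc N) (Suc r) = sig N r - of_nat N * sig N (Suc r)"
proof (cases "r < N")
  case True
  then obtain d where d: "N - r = Suc d" by (metis Suc_diff_Suc)
  then have d2: "N - Suc r = d" by simp
  show ?thesis unfolding sig_def S1_def using d d2 by (simp add: algebra_simps)
next
  case False
  then show ?thesis unfolding sig_def S1_def by (simp add: stirling_less)
qed

lemma th_WW_pow: "th lam (WW lam ^ N * g) = fps_const (of_nat N * lam) * (WW lam ^ N * g) + WW lam ^ Suc N * fps_deriv g"
proof -
  have dW: "fps_deriv (WW lam) = fps_const lam" by (simp add: WW_def)
  have "WW lam * fps_deriv (WW lam ^ N) = fps_const (of_nat N * lam) * WW lam ^ N"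
  proof (cases N)
    case 0 then show ?thesis by simp
  next
    case (Suc m)
    have "WW lam * fps_deriv (WW lam ^ Suc m) = (fps_const (of_nat (Suc m)) * fps_const lam) * (WW lam * WW lam ^ m)"
      by (simp only: fps_deriv_power dW diff_Suc_1 mult_ac)
    also have "\<dots> = fps_const (of_nat (Suc m) * lam) * WW lam ^ Suc m"
      by (simp only: fps_const_mult power_Suc)
    finally show ?thesis using Suc by simp
  qed
  then show ?thesis by (simp add: th_def distrib_left mult.assoc[symmetric])
qed

lemma op_identity:
  "WW lam ^ N * (fps_deriv ^^ N) f = (\<Sum>r\<le>N. fps_const (sig N r * lam ^ (N - r)) * (th lam ^^ r) f)"
proof (induct N)
  case 0 then show ?case by (simp add: sig_00)
next
  case (Suc N)
  define T where "T r = (th lam ^^ r) f" for r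
  have "WW lam ^ Suc N * (fps_deriv ^^ Suc N) f = th lam (WW lam ^ N * (fps_deriv ^^ N) f) - fps_const (of_nat N * lam) * (WW lam ^ N * (fps_deriv ^^ N) f)"
    by (simp add: th_WW_pow)
  also have "\<dots> = (\<Sum>r\<le>N. fps_const (sig N r * lam ^ (N - r)) * T (Suc r))
     - (\<Sum>r\<le>N. fps_const (of_nat N * lam) * (fps_const (sig N r * lam ^ (N - r)) * T r))"
    unfolding Suc by (simp add: th_sum th_const T_def sum_distrib_left)
  also have "(\<Sum>r\<le>N. fps_const (of_nat N * lam) * (fps_const (sig N r * lam ^ (N - r)) * T r))
     = (\<Sum>r\<le>Suc N. fps_const (of_nat N * lam) * (fps_const (sig N r * lam ^ (N - r)) * T r))"
    by (simp add: sig_big)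
  also have "\<dots> = (\<Sum>r\<le>N. fps_const (of_nat N * sig N (Suc r) * lam ^ (N - r)) * T (Suc r))"
  proof -
    have z: "fps_const (of_nat N * lam) * (fps_const (sig N 0 * lam ^ (N - 0)) * T 0) = 0"
      by (cases N) (simp_all add: sig_Suc0)
    have "(\<Sum>r\<le>N. fps_const (of_nat N * lam) * (fps_const (sig N (Suc r) * lam ^ (N - Suc r)) * T (Suc r))) =
         (\<Sum>r\<le>N. fps_const (of_nat N * sig N (Suc r) * lam ^ (N - r)) * T (Suc r))"
    proof (intro sum.cong refl)
      fix r assume "r \<in> {..N}"
      show "fps_const (of_nat N * lam) * (fps_const (sig N (Suc r) * lam ^ (N - Suc r)) * T (Suc r)) =
           fps_const (of_nat N * sig N (Suc r) * lam ^ (N - r)) * T (Suc r)"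
      proof (cases "r < N")
        case True
        then have "lam ^ (N - r) = lam * lam ^ (N - Suc r)" by (metis Suc_diff_Suc power_Suc)
        then have "of_nat N * lam * (sig N (Suc r) * lam ^ (N - Suc r)) = of_nat N * sig N (Suc r) * lam ^ (N - r)"
          by simp
        then show ?thesis by (simp only: mult.assoc[symmetric] fps_const_mult)
      next
        case False then show ?thesis by (simp add: sig_big)
      qed
    qed
    then show ?thesis by (simp only: sum.atMost_Suc_shift z add_0_left)
  qed
  finally have "WW lam ^ Suc N * (fps_deriv ^^ Suc N) f =
     (\<Sum>r\<le>N. fps_const (sig N r * lam ^ (N - r)) * T (Suc r) - fps_const (of_nat N * sig N (Suc r) * lam ^ (N - r)) * T (Suc r))"
    by (simp only: sum_subtractf)
  also have "\<dots> = (\<Sum>r\<le>N. fps_const (sig (Suc N) (Suc r) * lam ^ (Suc N - Suc r)) * T (Suc r))"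
  proof (intro sum.cong refl)
    fix r
    have "sig N r * lam ^ (N - r) - of_nat N * sig N (Suc r) * lam ^ (N - r) = sig (Suc N) (Suc r) * lam ^ (Suc N - Suc r)"
      by (simp add: sig_rec left_diff_distrib)
    then show "fps_const (sig N r * lam ^ (N - r)) * T (Suc r) - fps_const (of_nat N * sig N (Suc r) * lam ^ (N - r)) * T (Suc r)
        = fps_const (sig (Suc N) (Suc r) * lam ^ (Suc N - Suc r)) * T (Suc r)"
      by (metis fps_const_sub left_diff_distrib)
  qed
  also have "\<dots> = (\<Sum>r\<le>Suc N. fps_const (sig (Suc N) r * lam ^ (Suc N - r)) * T r)"
    by (simp only: sum.atMost_Suc_shift sig_Suc0 mult_zero_left fps_const_0_eq_0 add_0_left)
  finally show ?case by (simp add: T_def)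
qed




lemma nth_deriv_coeff: "((fps_deriv ^^ N) (f::real fps)) $ k = (fact (k + N) / fact k) * f $ (k + N)"
proof (induct N arbitrary: f)
  case 0
  have "(fact k :: real) \<noteq> 0" by simp
  then show ?case by simp
next
  case (Suc N)
  have "((fps_deriv ^^ Suc N) f) $ k = ((fps_deriv ^^ N) (fps_deriv f)) $ k"
    by (simp add: funpow_Suc_right del: funpow.simps)
  also have "\<dots> = fact (k + N) / fact k * (of_nat (k + N + 1) * f $ (k + Suc N))"
    using Suc by simp
  also have "\<dots> = fact (k + Suc N) / fact k * f $ (k + Suc N)"
    by (simp add: algebra_simps add_divide_distrib)
  finally show ?case .
qed

lemma compose_lin_nth: "(g oo (fps_const c * fps_X)) $ p = c ^ p * (g $ p :: real)"
proof -
  have "(g oo (fps_const c * fps_X)) $ p = (\<Sum>i=0..p. g $ i * (c ^ i * (if p = i then 1 else 0)))"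
    unfolding fps_compose_nth by (simp add: power_mult_distrib fps_const_power)
  also have "\<dots> = c ^ p * g $ p"
    by (simp add: if_distrib[of "(*) _"] cong: if_cong)
  finally show ?thesis .
qed

lemma pochhammer_falling: "pochhammer (a::real) l = falling (a + of_nat l - 1) l"
proof (induct l arbitrary: a)
  case 0 then show ?case by simp
next
  case (Suc l)
  have "(\<Prod>j<l. a + real (Suc l) - 1 - real (Suc j)) = (\<Prod>j<l. a + real l - 1 - real j)"
    by (intro prod.cong refl) simp
  then have "falling (a + of_nat (Suc l) - 1) (Suc l) = (a + of_nat l) * falling (a + of_nat l - 1) l"
    unfolding falling_def by (subst prod.lessThan_Suc_shift) simp
  then show ?case using Suc by (simp add: pochhammer_Suc)
qed

lemma gchoose_neg: "(- (a::real)) gchoose m = (-1) ^ m * falling (a + of_nat m - 1) m / fact m"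
  by (simp add: gbinomial_pochhammer pochhammer_falling)

lemma P_pow_nth:
  "(inverse (WW lam) ^ N) $ l = (-1) ^ l * falling (of_nat N + of_nat l - 1) l * lam ^ l / fact l"
proof -
  have c0: "(fps_const lam * fps_X :: real fps) $ 0 = 0" by simp
  have "inverse (WW lam) ^ N = fps_binomial (- of_nat N) oo (fps_const lam * fps_X)"
    unfolding compose_lin_inv[symmetric] fps_binomial_minus_one[symmetric]
      fps_compose_power[OF c0] fps_binomial_power by simp
  then show ?thesis by (simp add: compose_lin_nth gchoose_neg)
qed

lemma ln_pow_nth: "((fps_ln (1::real)) ^ m) $ p = fact m * sig p m / fact p"
proof (induct m arbitrary: p)
  case 0
  then show ?case by (cases p) (simp_all add: sig_def S1_def)
next
  case (Suc m)
  define A where "A = (fps_ln (1::real)) ^ Suc m"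
  have "(1 + fps_X) * fps_deriv A = fps_const (of_nat (Suc m)) * fps_ln 1 ^ m"
  proof -
    have "(1 + fps_X :: real fps) * inverse (1 + fps_X) = 1" by (simp add: inverse_mult_eq_1')
    then show ?thesis
      unfolding A_def fps_deriv_power fps_ln_deriv
      by (simp add: ac_simps)
  qed
  then have rel: "of_nat (Suc p) * A $ Suc p + of_nat p * A $ p = of_nat (Suc m) * (fact m * sig p m / fact p)" for p
  proof -
    assume h: "(1 + fps_X) * fps_deriv A = fps_const (of_nat (Suc m)) * fps_ln 1 ^ m"
    have "((1 + fps_X) * fps_deriv A) $ p = of_nat (Suc p) * A $ Suc p + of_nat p * A $ p"
      by (cases p) (simp_all add: distrib_right)
    then show ?thesis using h Suc by simp
  qed
  show ?case
  proof (induct p)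
    case 0 then show ?case by (simp add: A_def[symmetric] A_def fps_power_zeroth sig_def S1_def)
  next
    case (Suc p)
    have "of_nat (Suc p) * A $ Suc p = of_nat (Suc m) * (fact m * sig p m / fact p) - of_nat p * A $ p"
      using rel[of p] by linarith
    then have "A $ Suc p = (of_nat (Suc m) * (fact m * sig p m / fact p) - of_nat p * A $ p) / of_nat (Suc p)"
      by (simp add: eq_divide_eq mult.commute del: of_nat_Suc)
    also have "\<dots> = fact (Suc m) * sig (Suc p) (Suc m) / fact (Suc p)"
      using Suc[unfolded A_def[symmetric]] by (simp add: sig_rec field_simps del: of_nat_Suc)
    finally show ?case by (simp add: A_def)
  qed
qed

lemma uu_pow_nth: assumes "lam \<noteq> 0"
  shows "(uu lam ^ m) $ p = lam ^ (p - m) * fact m * sig p m / fact p"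
proof -
  have c0: "(fps_const lam * fps_X :: real fps) $ 0 = 0" by simp
  have "(uu lam ^ m) $ p = (1/lam) ^ m * (lam ^ p * (fact m * sig p m / fact p))"
    unfolding uu_def log1p_fps_def power_mult_distrib fps_compose_power[OF c0]
    by (simp add: fps_const_power compose_lin_nth ln_pow_nth)
  also have "\<dots> = lam ^ (p - m) * fact m * sig p m / fact p"
  proof (cases "m \<le> p")
    case True
    then have "lam ^ p = lam ^ (p - m) * lam ^ m" by (simp add: power_add[symmetric])
    then show ?thesis using assms by (simp add: field_simps)
  next
    case False then show ?thesis by (simp add: sig_big)
  qed
  finally show ?thesis .
qed

lemma mhalf_pow: "((-1::real)/2)^m = (-1)^m / 2^m"
  by (rule power_divide)
lemma mhalf_pow': "(- (1/2::real))^m = (-1)^m / 2^m"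
proof -
  have "(- (1/2::real)) = (-1)/2" by simp
  then show ?thesis by (metis power_divide)
qed

lemma Bh_nth: assumes "lam \<noteq> 0"
  shows "(Bh lam (- of_nat i)) $ p = (\<Sum>m\<le>p. (-1/2) ^ m * falling (of_nat i + of_nat m - 1) m
           * lam ^ (p - m) * sig p m / fact p)"
  unfolding Bh_def fps_compose_nth atLeast0AtMost
  by (intro sum.cong refl)
     (simp add: power_mult_distrib fps_const_power uu_pow_nth[OF assms] gchoose_neg power_divide
        mhalf_pow mhalf_pow' field_simps)

lemma Bu_nth: assumes "lam \<noteq> 0"
  shows "(Bu lam (- of_nat j)) $ q = (\<Sum>n\<le>q. (-1) ^ n * falling (of_nat j + of_nat n - 1) n
           * lam ^ (q - n) * sig q n / fact q)"
  unfolding Bu_def fps_compose_nth atLeast0AtMost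
  by (intro sum.cong refl)
     (simp add: uu_pow_nth[OF assms] gchoose_neg field_simps)




lemma harm_zero: "n < j \<Longrightarrow> harm n j = 0"
  by (cases j) auto

lemma harm_rec: "harm (Suc n) (Suc j) = harm n (Suc j) + harm n j / of_nat (Suc n)"
proof (cases "j \<le> n")
  case True
  then show ?thesis by (simp add: sum.cl_ivl_Suc)
next
  case False
  then show ?thesis by (simp add: sum.cl_ivl_Suc harm_zero)
qed

lemma stirling_harm: "real (stirling (Suc n) (Suc j)) = fact n * harm n j"
proof (induct n arbitrary: j)
  case 0
  then show ?case by (cases j) simp_all
next
  case (Suc n)
  show ?case
  proof (cases j)
    case 0
    then show ?thesis by (simp only: stirling_Suc_n_1 harm.simps(1) of_nat_fact mult_1_right)
  next
    case (Suc j')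
    have "real (stirling (Suc (Suc n)) (Suc j)) = of_nat (Suc n) * real (stirling (Suc n) (Suc j)) + real (stirling (Suc n) j)"
      by (simp only: stirling.simps(4) of_nat_add of_nat_mult)
    also have "\<dots> = of_nat (Suc n) * (fact n * harm n (Suc j')) + fact n * harm n j'"
      using Suc.hyps Suc by simp
    also have "\<dots> = fact (Suc n) * harm (Suc n) j"
      using Suc by (simp add: harm_rec field_simps del: of_nat_Suc harm.simps)
    finally show ?thesis .
  qed
qed

lemma S1pow_choose: "S1pow i M = (M + i) choose i"
proof (induct i arbitrary: M)
  case 0 then show ?case by simp
next
  case (Suc i)
  have "S1pow (Suc i) M = (\<Sum>l\<le>M. i + l choose i)" using Suc by (simp add: add.commute)
  also have "\<dots> = i + M + 1 choose (i + 1)" by (rule choose_rising_sum(1))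
  finally show ?case by (simp add: add.commute)
qed

lemma acoef_eq:
  assumes "lam \<noteq> 0" "1 \<le> r" "r \<le> N" "i \<le> r"
  shows "lam ^ N * (acoef N r i x * inverse (lam ^ r) * inverse (2 ^ i))
     = sig N r * lam ^ (N - r) * (of_nat (r choose i) * (-1) ^ i * fact i / 2 ^ i * falling x (r - i))"
proof -
  obtain N' where N': "N = Suc N'" using assms by (cases N) auto
  obtain r' where r': "r = Suc r'" using assms by (cases r) auto
  have st: "fact (N - 1) * harm (N - 1) (r - 1) = real (stirling N r)"
    using stirling_harm[of N' r'] N' r' by simp
  have s1: "S1pow i (r - i) = r choose i" using assms by (simp add: S1pow_choose)
  have sg: "(-1::real) ^ (N + i - r) = (-1) ^ (N - r) * (-1) ^ i"
    using assms by (simp add: power_add[symmetric])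
  have lp: "lam ^ N = lam ^ (N - r) * lam ^ r" using assms by (simp add: power_add[symmetric])
  have "lam ^ N * (acoef N r i x * inverse (lam ^ r) * inverse (2 ^ i)) =
     (-1) ^ (N - r) * real (stirling N r) * lam ^ (N - r) * (of_nat (r choose i) * (-1) ^ i * fact i / 2 ^ i * falling x (r - i))"
    unfolding acoef_def s1 sg lp using st assms by (simp add: field_simps)
  also have "(-1) ^ (N - r) * real (stirling N r) = sig N r"
    by (simp add: sig_def S1_def)
  finally show ?thesis .
qed




lemma swap_tri: fixes K :: nat and g :: "nat \<Rightarrow> nat \<Rightarrow> real"
  shows "(\<Sum>x\<le>K. \<Sum>y\<le>K - x. g x y) = (\<Sum>y\<le>K. \<Sum>x\<le>K - y. g x y)"
proof -
  have e: "x \<le> K \<Longrightarrow> {y \<in> {..K}. x + y \<le> K} = {..K - x}" for x :: nat by auto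
  have e2: "y \<le> K \<Longrightarrow> {x \<in> {..K}. x + y \<le> K} = {..K - y}" for y :: nat by auto
  have "(\<Sum>x\<in>{..K}. \<Sum>y\<in>{y \<in> {..K}. x + y \<le> K}. g x y) = (\<Sum>y\<in>{..K}. \<Sum>x\<in>{x \<in> {..K}. x + y \<le> K}. g x y)"
    by (rule sum.swap_restrict) auto
  moreover have "(\<Sum>x\<in>{..K}. \<Sum>y\<in>{y \<in> {..K}. x + y \<le> K}. g x y) = (\<Sum>x\<le>K. \<Sum>y\<le>K - x. g x y)"
    by (intro sum.cong refl) auto
  moreover have "(\<Sum>y\<in>{..K}. \<Sum>x\<in>{x \<in> {..K}. x + y \<le> K}. g x y) = (\<Sum>y\<le>K. \<Sum>x\<le>K - y. g x y)"
    by (intro sum.cong refl) auto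
  ultimately show ?thesis by simp
qed

lemma tri_reindex: fixes K :: nat and g :: "nat \<Rightarrow> nat \<Rightarrow> real"
  shows "(\<Sum>p\<le>K. \<Sum>m\<le>p. g m (p - m)) = (\<Sum>m\<le>K. \<Sum>e\<le>K - m. g m e)"
proof -
  have "(\<Sum>p\<le>K. \<Sum>m\<le>p. g m (p - m)) = (\<Sum>m\<le>K. \<Sum>p\<in>{m..K}. g m (p - m))"
  proof -
    have "(\<Sum>p\<in>{..K}. \<Sum>m\<in>{m \<in> {..K}. m \<le> p}. g m (p - m)) = (\<Sum>m\<in>{..K}. \<Sum>p\<in>{p \<in> {..K}. m \<le> p}. g m (p - m))"
      by (rule sum.swap_restrict) auto
    moreover have "{m \<in> {..K}. m \<le> p} = {..p}" if "p \<le> K" for p using that by auto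
    moreover have "{p \<in> {..K}. m \<le> p} = {m..K}" for m by auto
    ultimately show ?thesis by simp
  qed
  also have "\<dots> = (\<Sum>m\<le>K. \<Sum>e\<le>K - m. g m e)"
  proof (rule sum.cong[OF refl])
    fix m assume mK: "m \<in> {..K}"
    show "(\<Sum>p\<in>{m..K}. g m (p - m)) = (\<Sum>e\<le>K - m. g m e)"
      by (rule sum.reindex_bij_witness[where i="\<lambda>e. e + m" and j="\<lambda>p. p - m"]) (use mK in auto)
  qed
  finally show ?thesis .
qed

lemma reorder:
  fixes k :: nat and H :: "nat \<Rightarrow> nat \<Rightarrow> nat \<Rightarrow> nat \<Rightarrow> nat \<Rightarrow> nat \<Rightarrow> real"
  shows "(\<Sum>l\<le>k. \<Sum>m\<le>k - l. \<Sum>e\<le>k - l - m. \<Sum>n\<le>k - l - m - e. \<Sum>f\<le>k - l - m - e - n.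
      H l m e n f (k - l - m - e - n - f))
 = (\<Sum>m\<le>k. \<Sum>n\<le>k - m. \<Sum>l\<le>k - m - n. \<Sum>e\<le>k - m - n - l. \<Sum>f\<le>k - m - n - l - e.
      (H l m e n f (k - m - n - l - e - f) :: real))"
proof -
  have A: "(\<Sum>l\<le>k. \<Sum>m\<le>k - l. \<Sum>e\<le>k - l - m. \<Sum>n\<le>k - l - m - e. \<Sum>f\<le>k - l - m - e - n.
      H l m e n f (k - l - m - e - n - f))
   = (\<Sum>m\<le>k. \<Sum>l\<le>k - m. \<Sum>e\<le>k - m - l. \<Sum>n\<le>k - m - l - e. \<Sum>f\<le>k - m - l - e - n.
      H l m e n f (k - m - l - e - n - f))"
  proof -
    have "(\<Sum>l\<le>k. \<Sum>m\<le>k - l. \<Sum>e\<le>k - l - m. \<Sum>n\<le>k - l - m - e. \<Sum>f\<le>k - l - m - e - n.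
      H l m e n f (k - l - m - e - n - f))
     = (\<Sum>m\<le>k. \<Sum>l\<le>k - m. \<Sum>e\<le>k - l - m. \<Sum>n\<le>k - l - m - e. \<Sum>f\<le>k - l - m - e - n.
      H l m e n f (k - l - m - e - n - f))"
      using swap_tri[where K=k and g="\<lambda>l m. \<Sum>e\<le>k - l - m. \<Sum>n\<le>k - l - m - e. \<Sum>f\<le>k - l - m - e - n.
      H l m e n f (k - l - m - e - n - f)"] by simp
    then show ?thesis by (simp add: diff_diff_left add_ac)
  qed
  have B: "(\<Sum>e\<le>k - m - l. \<Sum>n\<le>k - m - l - e. \<Sum>f\<le>k - m - l - e - n.
      H l m e n f (k - m - l - e - n - f))
    = (\<Sum>n\<le>k - m - l. \<Sum>e\<le>k - m - l - n. \<Sum>f\<le>k - m - l - e - n.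
      H l m e n f (k - m - l - e - n - f))" for m l
    by (rule swap_tri)
  have C: "(\<Sum>l\<le>k - m. \<Sum>n\<le>k - m - l. \<Sum>e\<le>k - m - l - n. \<Sum>f\<le>k - m - l - e - n.
      H l m e n f (k - m - l - e - n - f))
    = (\<Sum>n\<le>k - m. \<Sum>l\<le>k - m - n. \<Sum>e\<le>k - m - l - n. \<Sum>f\<le>k - m - l - e - n.
      H l m e n f (k - m - l - e - n - f))" for m
    by (rule swap_tri)
  show ?thesis unfolding A B C
    by (simp add: diff_diff_left add_ac)
qed




definition hc :: "nat \<Rightarrow> real \<Rightarrow> nat \<Rightarrow> nat \<Rightarrow> real" where
  "hc i lam m e = (-1/2) ^ m * falling (of_nat i + of_nat m - 1) m * lam ^ e * sig (e + m) m / fact (e + m)"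
definition uc :: "nat \<Rightarrow> real \<Rightarrow> nat \<Rightarrow> nat \<Rightarrow> real" where
  "uc j lam n f = (-1) ^ n * falling (of_nat j + of_nat n - 1) n * lam ^ f * sig (f + n) n / fact (f + n)"
definition pc :: "nat \<Rightarrow> real \<Rightarrow> nat \<Rightarrow> real" where
  "pc N lam l = (-1) ^ l * falling (of_nat N + of_nat l - 1) l * lam ^ l / fact l"

lemma conv_tri:
  fixes X Y :: "real fps"
  assumes "\<And>p. X $ p = (\<Sum>m\<le>p. a m (p - m))"
  shows "(X * Y) $ K = (\<Sum>m\<le>K. \<Sum>e\<le>K - m. a m e * Y $ (K - m - e))"
proof -
  have "(X * Y) $ K = (\<Sum>p\<le>K. \<Sum>m\<le>p. a m (p - m) * Y $ (K - m - (p - m)))"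
    unfolding fps_mult_nth atLeast0AtMost assms sum_distrib_right
    by (intro sum.cong refl) auto
  also have "\<dots> = (\<Sum>m\<le>K. \<Sum>e\<le>K - m. a m e * Y $ (K - m - e))"
    by (rule tri_reindex[where g="\<lambda>m e. a m e * Y $ (K - m - e)"])
  finally show ?thesis .
qed

lemma Bh_nth': "lam \<noteq> 0 \<Longrightarrow> (Bh lam (- of_nat i)) $ p = (\<Sum>m\<le>p. hc i lam m (p - m))"
  unfolding Bh_nth hc_def by (intro sum.cong refl) auto

lemma Bu_nth': "lam \<noteq> 0 \<Longrightarrow> (Bu lam (- of_nat j)) $ p = (\<Sum>n\<le>p. uc j lam n (p - n))"
  unfolding Bu_nth uc_def by (intro sum.cong refl) auto

lemma T_expand:
  assumes "lam \<noteq> 0"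
  shows "(inverse (WW lam) ^ N * (Bh lam (- of_nat i) * (Bu lam (- of_nat j) * F))) $ k =
    (\<Sum>l\<le>k. \<Sum>m\<le>k - l. \<Sum>e\<le>k - l - m. \<Sum>n\<le>k - l - m - e. \<Sum>f\<le>k - l - m - e - n.
      pc N lam l * (hc i lam m e * (uc j lam n f * F $ (k - l - m - e - n - f))))"
proof -
  have "(inverse (WW lam) ^ N * (Bh lam (- of_nat i) * (Bu lam (- of_nat j) * F))) $ k
     = (\<Sum>l\<le>k. pc N lam l * (\<Sum>m\<le>k - l. \<Sum>e\<le>k - l - m. hc i lam m e *
          (\<Sum>n\<le>k - l - m - e. \<Sum>f\<le>k - l - m - e - n. uc j lam n f * F $ (k - l - m - e - n - f))))"
    unfolding fps_mult_nth[of "inverse (WW lam) ^ N"] atLeast0AtMost P_pow_nth pc_def[symmetric]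
      conv_tri[OF Bh_nth'[OF assms]] conv_tri[OF Bu_nth'[OF assms]] ..
  then show ?thesis by (simp only: sum_distrib_left)
qed

lemma pw:
  assumes "l + e + f + s = a" "i \<le> r"
  shows "fact k / (fact m * fact n * fact a) * (- 1 / 2) ^ m * (- 1) ^ n
         * falling (of_nat i + of_nat m - 1) m
         * falling (of_nat r + of_nat n - of_nat i - 1) n
         * ((- 1) ^ l * lam ^ (a - s)
              * (fact a / (fact l * fact e * fact f * fact s))
              / (of_nat ((e + m) choose m) * of_nat ((f + n) choose n))
              * falling (of_nat N + of_nat l - 1) l
              * of_int (S1 (e + m) m) * of_int (S1 (f + n) n)
              * Ch s lam x)
    = fact k * (pc N lam l * (hc i lam m e * (uc (r - i) lam n f * (changhee_gf lam x) $ s)))"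
proof -
  have ls: "lam ^ (a - s) = lam ^ l * lam ^ e * lam ^ f"
  proof -
    have "a - s = l + e + f" using assms(1) by linarith
    then show ?thesis by (simp add: power_add)
  qed
  have c1: "real ((e + m) choose m) = fact (e + m) / (fact m * fact e)"
    by (simp add: binomial_fact)
  have c2: "real ((f + n) choose n) = fact (f + n) / (fact n * fact f)"
    by (simp add: binomial_fact)
  have ri: "real (r - i) = real r - real i" using assms by simp
  show ?thesis
    unfolding ls c1 c2 pc_def hc_def uc_def sig_def Ch_def ri
    by (simp add: field_simps)
qed




lemma comb:
  fixes lam x :: real and N k r i :: nat
  assumes "lam \<noteq> 0" "i \<le> r"
  shows "(\<Sum>m\<le>k. \<Sum>n\<le>k - m. let a = k - m - n in
         fact k / (fact m * fact n * fact a) * (- 1 / 2) ^ m * (- 1) ^ n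
         * falling (of_nat i + of_nat m - 1) m
         * falling (of_nat r + of_nat n - of_nat i - 1) n
         * (\<Sum>l\<le>a. \<Sum>e\<le>a - l. \<Sum>f\<le>a - l - e. let s = a - l - e - f in
              (- 1) ^ l * lam ^ (a - s)
              * (fact a / (fact l * fact e * fact f * fact s))
              / (of_nat ((e + m) choose m) * of_nat ((f + n) choose n))
              * falling (of_nat N + of_nat l - 1) l
              * of_int (S1 (e + m) m) * of_int (S1 (f + n) n)
              * Ch s lam x))
   = fact k * (inverse (WW lam) ^ N * Bh lam (- of_nat i) * Bu lam (- of_nat (r - i)) * changhee_gf lam x) $ k"
proof -
  define F where "F = changhee_gf lam x"
  have eq1: "inverse (WW lam) ^ N * Bh lam (- of_nat i) * Bu lam (- of_nat (r - i)) * F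
     = inverse (WW lam) ^ N * (Bh lam (- of_nat i) * (Bu lam (- of_nat (r - i)) * F))"
    by (simp add: mult.assoc)
  have "fact k * (inverse (WW lam) ^ N * Bh lam (- of_nat i) * Bu lam (- of_nat (r - i)) * F) $ k
     = fact k * (\<Sum>m\<le>k. \<Sum>n\<le>k - m. \<Sum>l\<le>k - m - n. \<Sum>e\<le>k - m - n - l. \<Sum>f\<le>k - m - n - l - e.
         pc N lam l * (hc i lam m e * (uc (r - i) lam n f * F $ (k - m - n - l - e - f))))"
    unfolding eq1 T_expand[OF assms(1)]
      reorder[where H="\<lambda>l m e n f s. pc N lam l * (hc i lam m e * (uc (r - i) lam n f * F $ s))"] ..
  also have "\<dots> = (\<Sum>m\<le>k. \<Sum>n\<le>k - m. \<Sum>l\<le>k - m - n. \<Sum>e\<le>k - m - n - l. \<Sum>f\<le>k - m - n - l - e.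
         fact k * (pc N lam l * (hc i lam m e * (uc (r - i) lam n f * F $ (k - m - n - l - e - f)))))"
    by (simp only: sum_distrib_left)
  also have "\<dots> = (\<Sum>m\<le>k. \<Sum>n\<le>k - m. let a = k - m - n in
         fact k / (fact m * fact n * fact a) * (- 1 / 2) ^ m * (- 1) ^ n
         * falling (of_nat i + of_nat m - 1) m
         * falling (of_nat r + of_nat n - of_nat i - 1) n
         * (\<Sum>l\<le>a. \<Sum>e\<le>a - l. \<Sum>f\<le>a - l - e. let s = a - l - e - f in
              (- 1) ^ l * lam ^ (a - s)
              * (fact a / (fact l * fact e * fact f * fact s))
              / (of_nat ((e + m) choose m) * of_nat ((f + n) choose n))
              * falling (of_nat N + of_nat l - 1) l
              * of_int (S1 (e + m) m) * of_int (S1 (f + n) n)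
              * Ch s lam x))"
    unfolding Let_def sum_distrib_left F_def
    by (intro sum.cong refl) (rule pw[symmetric], auto simp: assms)
  finally show ?thesis unfolding F_def by simp
qed

theorem theorem4:
  fixes lam x :: real and N k :: nat
  assumes "lam \<noteq> 0" and "N \<ge> 1"
  shows "Ch (k + N) lam x =
    lam ^ N * (\<Sum>r = 1..N. \<Sum>i = 0..r.
      acoef N r i x * inverse (lam ^ r) * inverse (2 ^ i) *
      (\<Sum>m\<le>k. \<Sum>n\<le>k - m. let a = k - m - n in
         fact k / (fact m * fact n * fact a) * (- 1 / 2) ^ m * (- 1) ^ n
         * falling (of_nat i + of_nat m - 1) m
         * falling (of_nat r + of_nat n - of_nat i - 1) n
         * (\<Sum>l\<le>a. \<Sum>e\<le>a - l. \<Sum>f\<le>a - l - e. let s = a - l - e - f in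
              (- 1) ^ l * lam ^ (a - s)
              * (fact a / (fact l * fact e * fact f * fact s))
              / (of_nat ((e + m) choose m) * of_nat ((f + n) choose n))
              * falling (of_nat N + of_nat l - 1) l
              * of_int (S1 (e + m) m) * of_int (S1 (f + n) n)
              * Ch s lam x)))"
proof -
  define F where "F = changhee_gf lam x"
  define P where "P = inverse (WW lam)"
  define c where "c r i = of_nat (r choose i) * (-1) ^ i * fact i / 2 ^ i * falling x (r - i)" for r i :: nat
  define G where "G r i = (P ^ N * Bh lam (- of_nat i) * Bu lam (- of_nat (r - i)) * F) $ k" for r i :: nat
  have PW: "P ^ N * WW lam ^ N = 1"
    by (simp add: P_def power_mult_distrib[symmetric] mult.commute WW_inv)
  have "(fps_deriv ^^ N) F = P ^ N * (WW lam ^ N * (fps_deriv ^^ N) F)"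
    by (simp add: mult.assoc[symmetric] PW)
  also have "\<dots> = P ^ N * (\<Sum>r\<le>N. fps_const (sig N r * lam ^ (N - r)) *
        (\<Sum>i\<le>r. fps_const (c r i) * (Bh lam (- of_nat i) * Bu lam (- of_nat (r - i)) * F)))"
    unfolding op_identity F_def thn_F[OF assms(1)] c_def ..
  also have "\<dots> = (\<Sum>r\<le>N. \<Sum>i\<le>r. fps_const (sig N r * lam ^ (N - r) * c r i) *
        (P ^ N * Bh lam (- of_nat i) * Bu lam (- of_nat (r - i)) * F))"
    unfolding sum_distrib_left
  proof (intro sum.cong refl)
    fix r i
    show "P ^ N * (fps_const (sig N r * lam ^ (N - r)) * (fps_const (c r i) * (Bh lam (- of_nat i) * Bu lam (- of_nat (r - i)) * F)))
      = fps_const (sig N r * lam ^ (N - r) * c r i) * (P ^ N * Bh lam (- of_nat i) * Bu lam (- of_nat (r - i)) * F)"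
      by (subst fps_const_mult[symmetric]) (simp only: mult_ac)
  qed
  finally have DN: "((fps_deriv ^^ N) F) $ k = (\<Sum>r\<le>N. \<Sum>i\<le>r. sig N r * lam ^ (N - r) * c r i * G r i)"
    by (simp add: G_def fps_sum_nth)
  have LHS: "Ch (k + N) lam x = fact k * ((fps_deriv ^^ N) F) $ k"
    unfolding nth_deriv_coeff Ch_def F_def by simp
  have r0: "(\<Sum>i\<le>0. sig N 0 * lam ^ (N - 0) * c 0 i * G 0 i) = 0"
    using assms(2) by (cases N) (simp_all add: sig_Suc0)
  have "Ch (k + N) lam x = fact k * (\<Sum>r=1..N. \<Sum>i\<le>r. sig N r * lam ^ (N - r) * c r i * G r i)"
    unfolding LHS DN using r0 by (simp add: atMost_atLeast0 sum.atLeast_Suc_atMost)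
  also have "\<dots> = (\<Sum>r=1..N. \<Sum>i=0..r. (lam ^ N * (acoef N r i x * inverse (lam ^ r) * inverse (2 ^ i))) * (fact k * G r i))"
    unfolding sum_distrib_left atLeast0AtMost
  proof (intro sum.cong refl)
    fix r i assume r: "r \<in> {1..N}" and i: "i \<in> {..r}"
    have "lam ^ N * (acoef N r i x * inverse (lam ^ r) * inverse (2 ^ i)) = sig N r * lam ^ (N - r) * c r i"
      using acoef_eq[OF assms(1), of r N i x] r i by (simp add: c_def)
    then show "fact k * (sig N r * lam ^ (N - r) * c r i * G r i) =
        lam ^ N * (acoef N r i x * inverse (lam ^ r) * inverse (2 ^ i)) * (fact k * G r i)"
      by simp
  qed
  also have "\<dots> = lam ^ N * (\<Sum>r=1..N. \<Sum>i=0..r. acoef N r i x * inverse (lam ^ r) * inverse (2 ^ i) * (fact k * G r i))"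
    by (simp add: sum_distrib_left mult_ac)
  finally have X: "Ch (k + N) lam x = lam ^ N * (\<Sum>r=1..N. \<Sum>i=0..r. acoef N r i x * inverse (lam ^ r) * inverse (2 ^ i) * (fact k * G r i))" .
  show ?thesis unfolding X
    apply (intro arg_cong[where f="\<lambda>s. lam ^ N * s"] sum.cong refl)
    apply (subst comb[OF assms(1)])
     apply simp
    apply (simp add: G_def P_def F_def)
    done
qed


end
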